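(* Let $-\frac1n<\alpha<0$, $\beta_1\ge0$, $\beta_2\in\mathbb{R}$. Let $f=(1-\alpha\varphi)^{1/\alpha}\in\mathcal{C}^+_\alpha(\mathbb{R}^n)$ with $o\in\mathrm{int}(K_f)$, and for $t>0$ small enough (so that it is well defined) set $$\widehat{f_t}(x)=\Big(1-\alpha\big[(1+\beta_1t)\varphi^*\big]^*(x)+\alpha\beta_2 t\Big)^{1/\alpha}=\Big(1-\alpha(1+\beta_1t)\varphi\big(\tfrac{x}{1+\beta_1 t}\big)+\alpha\beta_2t\Big)^{1/\alpha}.$$ Then $$\lim_{t\to0^+}\int_{\mathbb{R}^n}\frac{\widehat{f_t}(x)-f(x)}{t}\,dx=\beta_2\int_{\mathbb{R}^n}f(x)^{1-\alpha}\,dx+\beta_1\,\delta J_\alpha(f,f),$$ and this limit is a finite real number.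
   Context: $\mathrm{Conv}(\mathbb{R}^n)$ is the set of proper, convex, lower semi-continuous $\varphi:\mathbb{R}^n\to\mathbb{R}\cup\{+\infty\}$; $\varphi$ is coercive if $\liminf_{|x|\to\infty}\varphi(x)/|x|>0$. For $\alpha<0$, $\mathcal{C}^+_\alpha(\mathbb{R}^n)$ is the set of $f=(1-\alpha\varphi)^{1/\alpha}$ with $\varphi\in\mathrm{Conv}(\mathbb{R}^n)$ nonnegative and coercive (convention: $f=0$ where $\varphi=+\infty$). $K_f=\overline{\mathrm{dom}\,\varphi}$ is the support of $f$, where $\mathrm{dom}\,\varphi=\{\varphi<\infty\}$. The Legendre transform is $\varphi^*(y)=\sup_x\{\langle x,y\rangle-\varphi(x)\}$. For $\alpha$-concave $f=(1-\alpha\varphi)^{1/\alpha}$, $g=(1-\alpha\psi)^{1/\alpha}$ and $t>0$, $f\oplus_\alpha t\cdot_\alpha g:=(1-\alpha(\varphi^*+t\psi^* )^* )^{1/\alpha}$; $J(f)=\int f\,dx$; $\delta J_\alpha(f,g):=\lim_{t\to0^+}\frac{J(f\oplus_\alpha t\cdot_\alpha g)-J(f)}{t}$ (it is known that $\delta J_\alpha(f,f)=nJ(f)-\int\varphi f^{1-\alpha}dx$ is finite). *)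

theory Defs
  imports "HOL-Analysis.Analysis"
begin

(* Functions R^n -> R \<union> {+\<infinity>} are modelled as 'a \<Rightarrow> ereal,
   with 'a a Euclidean space of dimension n = DIM('a). *)

definition proper_fun :: "('a \<Rightarrow> ereal) \<Rightarrow> bool" where
  "proper_fun \<phi> \<longleftrightarrow> (\<exists>x. \<phi> x < \<infinity>) \<and> (\<forall>x. \<phi> x > -\<infinity>)"

definition convex_efun :: "('a::real_vector \<Rightarrow> ereal) \<Rightarrow> bool" where
  "convex_efun \<phi> \<longleftrightarrow> (\<forall>x y t. 0 \<le> t \<and> t \<le> 1 \<longrightarrow>
      \<phi> ((1 - t) *\<^sub>R x + t *\<^sub>R y) \<le> ereal (1 - t) * \<phi> x + ereal t * \<phi> y)"

definition lsc_efun :: "('a::topological_space \<Rightarrow> ereal) \<Rightarrow> bool" where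
  "lsc_efun \<phi> \<longleftrightarrow> (\<forall>x. \<phi> x \<le> Liminf (at x) \<phi>)"

definition Conv :: "('a::euclidean_space \<Rightarrow> ereal) set" where
  "Conv = {\<phi>. proper_fun \<phi> \<and> convex_efun \<phi> \<and> lsc_efun \<phi>}"

definition coercive :: "('a::euclidean_space \<Rightarrow> ereal) \<Rightarrow> bool" where
  "coercive \<phi> \<longleftrightarrow> Liminf at_infinity (\<lambda>x. \<phi> x / ereal (norm x)) > 0"

definition legendre :: "('a::euclidean_space \<Rightarrow> ereal) \<Rightarrow> 'a \<Rightarrow> ereal" where
  "legendre \<phi> y = (SUP x. ereal (x \<bullet> y) - \<phi> x)"

definition alpha_fun :: "real \<Rightarrow> ('a \<Rightarrow> ereal) \<Rightarrow> 'a \<Rightarrow> real" where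
  "alpha_fun \<alpha> \<phi> x = (if \<phi> x = \<infinity> then 0 else (1 - \<alpha> * real_of_ereal (\<phi> x)) powr (1 / \<alpha>))"

(* C^+_\<alpha>(R^n), parametrised by the convex function \<phi>: f = alpha_fun \<alpha> \<phi> with
   \<phi> \<in> Conv, \<phi> \<ge> 0, coercive *)
definition Cplus_phi :: "('a::euclidean_space \<Rightarrow> ereal) set" where
  "Cplus_phi = {\<phi>. \<phi> \<in> Conv \<and> (\<forall>x. \<phi> x \<ge> 0) \<and> coercive \<phi>}"

definition Ksupp :: "('a::euclidean_space \<Rightarrow> ereal) \<Rightarrow> 'a set" where
  "Ksupp \<phi> = closure {x. \<phi> x < \<infinity>}"

definition J :: "('a::euclidean_space \<Rightarrow> real) \<Rightarrow> real" where
  "J f = integral\<^sup>L lborel f"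

(* f \<oplus>_\<alpha> t \<cdot>_\<alpha> g for f = (1-\<alpha>\<phi>)^(1/\<alpha>), g = (1-\<alpha>\<psi>)^(1/\<alpha>) *)
definition alpha_sum :: "real \<Rightarrow> ('a::euclidean_space \<Rightarrow> ereal) \<Rightarrow> real \<Rightarrow> ('a \<Rightarrow> ereal) \<Rightarrow> 'a \<Rightarrow> real" where
  "alpha_sum \<alpha> \<phi> t \<psi> =
     alpha_fun \<alpha> (legendre (\<lambda>y. legendre \<phi> y + ereal t * legendre \<psi> y))"

definition deltaJ :: "real \<Rightarrow> ('a::euclidean_space \<Rightarrow> ereal) \<Rightarrow> ('a \<Rightarrow> ereal) \<Rightarrow> real" where
  "deltaJ \<alpha> \<phi> \<psi> =
     Lim (at_right 0) (\<lambda>t. (J (alpha_sum \<alpha> \<phi> t \<psi>) - J (alpha_fun \<alpha> \<phi>)) / t)"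

definition fhat :: "real \<Rightarrow> real \<Rightarrow> real \<Rightarrow> ('a::euclidean_space \<Rightarrow> ereal) \<Rightarrow> real \<Rightarrow> 'a \<Rightarrow> real" where
  "fhat \<alpha> \<beta>1 \<beta>2 \<phi> t x =
     (if \<phi> (x /\<^sub>R (1 + \<beta>1 * t)) = \<infinity> then 0
      else (1 - \<alpha> * (1 + \<beta>1 * t) * real_of_ereal (\<phi> (x /\<^sub>R (1 + \<beta>1 * t))) + \<alpha> * \<beta>2 * t)
             powr (1 / \<alpha>))"

end

theory Submission
  imports Defs
begin
lemma nn_integral_scale:
  fixes g :: "'a::euclidean_space \<Rightarrow> ennreal"
  assumes c: "c \<noteq> 0" and [measurable]: "g \<in> borel_measurable borel"
  shows "(\<integral>\<^sup>+x. g x \<partial>lborel) = ennreal (\<bar>c\<bar>^DIM('a)) * (\<integral>\<^sup>+x. g (c *\<^sub>R x) \<partial>lborel)"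
  by (subst lborel_affine[OF c, of 0]) (simp add: nn_integral_density nn_integral_distr nn_integral_cmult)

lemma integrable_scale:
  fixes g :: "'a::euclidean_space \<Rightarrow> real"
  assumes c: "c \<noteq> 0" and g: "integrable lborel g"
  shows "integrable lborel (\<lambda>x. g (c *\<^sub>R x))"
proof -
  have [measurable]: "g \<in> borel_measurable borel" using g by auto
  have "(\<integral>\<^sup>+x. ennreal (norm (g x)) \<partial>lborel) < \<infinity>" using g unfolding integrable_iff_bounded by auto
  then have "ennreal (\<bar>c\<bar>^DIM('a)) * (\<integral>\<^sup>+x. ennreal (norm (g (c *\<^sub>R x))) \<partial>lborel) < \<infinity>"
    using nn_integral_scale[OF c, of "\<lambda>x. ennreal (norm (g x))"] by simp
  then have "(\<integral>\<^sup>+x. ennreal (norm (g (c *\<^sub>R x))) \<partial>lborel) = 0 \<or> (\<integral>\<^sup>+x. ennreal (norm (g (c *\<^sub>R x))) \<partial>lborel) < \<infinity>"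
    using c by (simp add: ennreal_mult_less_top)
  then have "(\<integral>\<^sup>+x. ennreal (norm (g (c *\<^sub>R x))) \<partial>lborel) < \<infinity>"
    by (elim disjE) simp_all
  then show ?thesis unfolding integrable_iff_bounded by simp
qed

lemma integrable_scale_iff:
  fixes g :: "'a::euclidean_space \<Rightarrow> real"
  assumes c: "c \<noteq> 0"
  shows "integrable lborel (\<lambda>x. g (c *\<^sub>R x)) \<longleftrightarrow> integrable lborel g"
  using integrable_scale[OF c, of g] integrable_scale[of "1/c" "\<lambda>x. g (c *\<^sub>R x)"] c
  by auto

lemma integral_scale:
  fixes g :: "'a::euclidean_space \<Rightarrow> real"
  assumes c: "c \<noteq> 0"
  shows "(\<integral>x. g x \<partial>lborel) = \<bar>c\<bar>^DIM('a) * (\<integral>x. g (c *\<^sub>R x) \<partial>lborel)"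
proof cases
  assume g: "integrable lborel g"
  then have [measurable]: "g \<in> borel_measurable borel" by auto
  show ?thesis
    using c g integrable_scale[OF c g]
    by (subst lborel_affine[OF c, of 0]) (simp add: integral_density integral_distr)
next
  assume "\<not> integrable lborel g" with c show ?thesis
    by (simp add: integrable_scale_iff not_integrable_integral_eq)
qed

lemma lsc_closed_sublevel:
  assumes "lsc_efun \<phi>"
  shows "closed {x. \<phi> x \<le> (y::ereal)}"
  unfolding closed_def
proof (rule Topological_Spaces.openI)
  fix x assume "x \<in> - {x. \<phi> x \<le> y}"
  then have "y < \<phi> x" by auto
  also have "\<phi> x \<le> Liminf (at x) \<phi>" using assms unfolding lsc_efun_def by auto
  finally have "eventually (\<lambda>z. y < \<phi> z) (at x)" by (rule less_LiminfD)
  then obtain U where U: "open U" "x \<in> U" "\<And>z. z \<in> U \<Longrightarrow> z \<noteq> x \<Longrightarrow> y < \<phi> z"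
    unfolding eventually_at_topological by blast
  have "U \<subseteq> - {x. \<phi> x \<le> y}" using U \<open>y < \<phi> x\<close> by (auto simp: not_le) (metis leD)
  then show "\<exists>T. open T \<and> x \<in> T \<and> T \<subseteq> - {x. \<phi> x \<le> y}" using U by blast
qed

lemma lsc_measurable:
  assumes "lsc_efun \<phi>"
  shows "\<phi> \<in> borel_measurable borel"
proof (rule borel_measurableI_le)
  fix y
  have "closed {x. \<phi> x \<le> y}" using lsc_closed_sublevel[OF assms] .
  then show "{x \<in> space borel. \<phi> x \<le> y} \<in> sets borel" by auto
qed

lemma lsc_closed_epi:
  assumes "lsc_efun \<phi>"
  shows "closed {p. \<phi> (fst p) \<le> ereal (snd p)}"
  unfolding closed_def
proof (rule Topological_Spaces.openI)
  fix p assume "p \<in> - {p. \<phi> (fst p) \<le> ereal (snd p)}"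
  then obtain x r where p: "p = (x, r)" and lt: "ereal r < \<phi> x" by (cases p) auto
  obtain r' where r': "ereal r < ereal r'" "ereal r' < \<phi> x" using ereal_dense2[OF lt] by blast
  note r'(2)
  also have "\<phi> x \<le> Liminf (at x) \<phi>" using assms unfolding lsc_efun_def by auto
  finally have "eventually (\<lambda>z. ereal r' < \<phi> z) (at x)" by (rule less_LiminfD)
  then obtain U where U: "open U" "x \<in> U" "\<And>z. z \<in> U \<Longrightarrow> z \<noteq> x \<Longrightarrow> ereal r' < \<phi> z"
    unfolding eventually_at_topological by blast
  have "U \<times> {..<r'} \<subseteq> - {p. \<phi> (fst p) \<le> ereal (snd p)}"
  proof
    fix q assume "q \<in> U \<times> {..<r'}"
    then obtain z s where q: "q = (z, s)" "z \<in> U" "s < r'" by auto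
    have "ereal r' < \<phi> z" using U(3)[of z] q r' by (cases "z = x") auto
    moreover have "ereal s < ereal r'" using q(3) by simp
    ultimately have "ereal s < \<phi> z" by (meson less_trans)
    then show "q \<in> - {p. \<phi> (fst p) \<le> ereal (snd p)}" using q by auto
  qed
  moreover have "open (U \<times> {..<r'})" using U by (intro open_Times) auto
  moreover have "p \<in> U \<times> {..<r'}" using p U r' by auto
  ultimately show "\<exists>T. open T \<and> p \<in> T \<and> T \<subseteq> - {p. \<phi> (fst p) \<le> ereal (snd p)}" by blast
qed

lemma convex_epi:
  assumes "convex_efun \<phi>"
  shows "convex {p. \<phi> (fst p) \<le> ereal (snd p)}"
  unfolding convex_alt
proof (intro ballI allI impI)
  fix p q and u :: real
  assume p: "p \<in> {p. \<phi> (fst p) \<le> ereal (snd p)}" and q: "q \<in> {p. \<phi> (fst p) \<le> ereal (snd p)}"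
    and u: "0 \<le> u \<and> u \<le> 1"
  have "\<phi> ((1 - u) *\<^sub>R fst p + u *\<^sub>R fst q) \<le> ereal (1 - u) * \<phi> (fst p) + ereal u * \<phi> (fst q)"
    using assms u unfolding convex_efun_def by blast
  also have "\<dots> \<le> ereal (1 - u) * ereal (snd p) + ereal u * ereal (snd q)"
    using p q u by (intro add_mono ereal_mult_left_mono) auto
  finally show "(1 - u) *\<^sub>R p + u *\<^sub>R q \<in> {p. \<phi> (fst p) \<le> ereal (snd p)}"
    by simp
qed

lemma legendre_ge: "ereal (x \<bullet> y) - \<phi> x \<le> legendre \<phi> y"
  unfolding legendre_def by (rule SUP_upper) auto

lemma legendre_le:
  assumes "\<And>x. ereal (x \<bullet> y) - \<phi> x \<le> c"
  shows "legendre \<phi> y \<le> c"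
  unfolding legendre_def by (rule SUP_least) (use assms in auto)

lemma biconj_le: "legendre (legendre \<phi>) x \<le> \<phi> x"
proof (rule legendre_le)
  fix y
  have "ereal (x \<bullet> y) - \<phi> x \<le> legendre \<phi> y" by (rule legendre_ge)
  then show "ereal (y \<bullet> x) - legendre \<phi> y \<le> \<phi> x"
    by (cases "\<phi> x"; cases "legendre \<phi> y") (auto simp: inner_commute)
qed

lemma legendre_lower:
  assumes "legendre \<phi> y \<le> ereal c"
  shows "ereal (x \<bullet> y - c) \<le> legendre (legendre \<phi>) x"
proof -
  have "ereal (x \<bullet> y) - legendre \<phi> y \<le> legendre (legendre \<phi>) x"
    using legendre_ge[of y x "legendre \<phi>"] by (simp add: inner_commute)
  moreover have "ereal (x \<bullet> y - c) \<le> ereal (x \<bullet> y) - legendre \<phi> y"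
    using assms by (cases "legendre \<phi> y") auto
  ultimately show ?thesis by order
qed

lemma fenchel_moreau:
  fixes \<phi> :: "'a::euclidean_space \<Rightarrow> ereal"
  assumes cv: "convex_efun \<phi>" and lsc: "lsc_efun \<phi>" and nn: "\<And>x. \<phi> x \<ge> 0"
    and pr: "\<phi> x0 < \<infinity>"
  shows "legendre (legendre \<phi>) x = \<phi> x"
proof (rule antisym[OF biconj_le], rule ccontr)
  assume "\<not> \<phi> x \<le> legendre (legendre \<phi>) x"
  then have "legendre (legendre \<phi>) x < \<phi> x" by simp
  then obtain M where M: "legendre (legendre \<phi>) x < ereal M" "ereal M < \<phi> x"
    using ereal_dense2 by blast
  define E where "E = {p. \<phi> (fst p) \<le> ereal (snd p)}"
  have "convex E" unfolding E_def by (rule convex_epi[OF cv])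
  moreover have "closed E" unfolding E_def by (rule lsc_closed_epi[OF lsc])
  moreover have "(x, M) \<notin> E" using M unfolding E_def by auto
  ultimately have "\<exists>a b. inner a (x, M) < b \<and> (\<forall>p\<in>E. inner a p > b)"
    by (rule separating_hyperplane_closed_point)
  then obtain a b where ab: "inner a (x, M) < b" "\<And>p. p \<in> E \<Longrightarrow> inner a p > b"
    by blast
  obtain a1 a2 where a: "a = (a1, a2)" by (cases a)
  have ax: "a1 \<bullet> x + a2 * M < b" using ab(1) a by simp
  have aE: "b < a1 \<bullet> z + a2 * r" if "\<phi> z \<le> ereal r" for z r
    using ab(2)[of "(z, r)"] that a unfolding E_def by simp
  define r0 where "r0 = real_of_ereal (\<phi> x0)"
  have r0: "\<phi> x0 = ereal r0" using pr nn[of x0] unfolding r0_def by (cases "\<phi> x0") auto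
  have a2: "a2 \<ge> 0"
  proof (rule ccontr)
    assume "\<not> a2 \<ge> 0"
    then have neg: "a2 < 0" by simp
    define k where "k = max 0 ((a1 \<bullet> x0 + a2 * r0 - b) / (- a2))"
    have "\<phi> x0 \<le> ereal (r0 + k)" using r0 unfolding k_def by simp
    then have "b < a1 \<bullet> x0 + a2 * (r0 + k)" by (rule aE)
    moreover have "a2 * k \<le> - (a1 \<bullet> x0 + a2 * r0 - b)"
    proof -
      have "(a1 \<bullet> x0 + a2 * r0 - b) / (- a2) \<le> k" unfolding k_def by simp
      moreover have "- a2 > 0" using neg by simp
      ultimately have "(a1 \<bullet> x0 + a2 * r0 - b) \<le> k * (- a2)" using pos_divide_le_eq by blast
      then show ?thesis by (simp add: algebra_simps)
    qed
    ultimately show False by (simp add: algebra_simps)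
  qed
  have fin: "\<phi> z = ereal (real_of_ereal (\<phi> z))" if "\<phi> z \<noteq> \<infinity>" for z
    using that nn[of z] by (cases "\<phi> z") auto
  show False
  proof (cases "a2 = 0")
    case False
    then have pos: "a2 > 0" using a2 by simp
    define y where "y = - (1 / a2) *\<^sub>R a1"
    have "legendre \<phi> y \<le> ereal (- b / a2)"
    proof (rule legendre_le)
      fix z
      show "ereal (z \<bullet> y) - \<phi> z \<le> ereal (- b / a2)"
      proof (cases "\<phi> z = \<infinity>")
        case True then show ?thesis by simp
      next
        case False
        define r where "r = real_of_ereal (\<phi> z)"
        have r: "\<phi> z = ereal r" using fin[OF False] unfolding r_def .
        have "b < a1 \<bullet> z + a2 * r" using aE[of z r] r by simp
        then have "b - a1 \<bullet> z < r * a2" by (simp add: algebra_simps)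
        then have lt: "(b - a1 \<bullet> z) / a2 < r" using pos by (simp add: divide_less_eq)
        have zy: "z \<bullet> y = - (a1 \<bullet> z) / a2" unfolding y_def by (simp add: inner_commute)
        have "- b / a2 = - (a1 \<bullet> z) / a2 - (b - a1 \<bullet> z) / a2" by (simp add: diff_divide_distrib)
        then have "z \<bullet> y - r \<le> - b / a2" using lt zy by linarith
        then show ?thesis using r by simp
      qed
    qed
    then have lo: "ereal (x \<bullet> y - (- b / a2)) \<le> legendre (legendre \<phi>) x" by (rule legendre_lower)
    have Mlt: "M < x \<bullet> y - (- b / a2)"
    proof -
      have "M * a2 < b - a1 \<bullet> x" using ax by (simp add: algebra_simps)
      then have "M < (b - a1 \<bullet> x) / a2" using pos by (simp add: less_divide_eq)
      moreover have "x \<bullet> y - (- b / a2) = (b - a1 \<bullet> x) / a2"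
        unfolding y_def by (simp add: inner_commute diff_divide_distrib)
      ultimately show ?thesis by simp
    qed
    have "ereal M < ereal (x \<bullet> y - (- b / a2))" using Mlt by simp
    from this lo have "ereal M < legendre (legendre \<phi>) x" by (rule less_le_trans)
    then show False using M(1) by simp
  next
    case True
    have sep: "b < a1 \<bullet> z" if "\<phi> z \<noteq> \<infinity>" for z
      using aE[of z "real_of_ereal (\<phi> z)"] fin[OF that] True by simp
    define d where "d = b - a1 \<bullet> x"
    have d: "d > 0" using ax True unfolding d_def by simp
    define s where "s = \<bar>M\<bar> / d"
    have s: "s \<ge> 0" using d unfolding s_def by simp
    define y where "y = - s *\<^sub>R a1"
    have "legendre \<phi> y \<le> ereal (- s * b)"
    proof (rule legendre_le)
      fix z
      show "ereal (z \<bullet> y) - \<phi> z \<le> ereal (- s * b)"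
      proof (cases "\<phi> z = \<infinity>")
        case True then show ?thesis by simp
      next
        case False
        define r where "r = real_of_ereal (\<phi> z)"
        have r: "\<phi> z = ereal r" using fin[OF False] unfolding r_def .
        have r0': "r \<ge> 0" using nn[of z] r by simp
        have "s * b \<le> s * (a1 \<bullet> z)" using sep[OF False] s by (intro mult_left_mono) auto
        moreover have "z \<bullet> y = - (s * (a1 \<bullet> z))" by (simp add: y_def inner_commute)
        ultimately have "z \<bullet> y - r \<le> - s * b" using r0' by linarith
        then show ?thesis using r by simp
      qed
    qed
    then have "ereal (x \<bullet> y - (- s * b)) \<le> legendre (legendre \<phi>) x" by (rule legendre_lower)
    moreover have "x \<bullet> y - (- s * b) = s * d" unfolding y_def d_def by (simp add: algebra_simps inner_commute)
    moreover have "s * d = \<bar>M\<bar>" unfolding s_def using d by simp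
    ultimately have "ereal \<bar>M\<bar> \<le> legendre (legendre \<phi>) x" by simp
    moreover have "ereal M \<le> ereal \<bar>M\<bar>" by simp
    ultimately have "ereal M \<le> legendre (legendre \<phi>) x" by (rule order.trans[rotated])
    then show False using M(1) by simp
  qed
qed

lemma coercive_bound:
  fixes \<phi> :: "'a::euclidean_space \<Rightarrow> ereal"
  assumes "coercive \<phi>"
  obtains c R where "c > 0" "R \<ge> 1" "\<And>x. norm x \<ge> R \<Longrightarrow> ereal (c * norm x) \<le> \<phi> x"
proof -
  have "0 < Liminf at_infinity (\<lambda>x. \<phi> x / ereal (norm x))" using assms unfolding coercive_def .
  then obtain c where c: "0 < ereal c" "ereal c < Liminf at_infinity (\<lambda>x. \<phi> x / ereal (norm x))"
    using ereal_dense2 by blast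
  then have "eventually (\<lambda>x. ereal c < \<phi> x / ereal (norm x)) at_infinity" by (intro less_LiminfD)
  then obtain b where b: "\<And>x. norm x \<ge> b \<Longrightarrow> ereal c < \<phi> x / ereal (norm x)"
    unfolding eventually_at_infinity by blast
  define R where "R = max b 1"
  have "ereal (c * norm x) \<le> \<phi> x" if "norm x \<ge> R" for x
  proof -
    have "norm x \<ge> 1" using that unfolding R_def by simp
    then have nx: "norm x > 0" by linarith
    have lt: "ereal c < \<phi> x / ereal (norm x)" using b[of x] that unfolding R_def by simp
    show ?thesis
    proof (cases "\<phi> x")
      case (real v)
      then have "c < v / norm x" using lt nx by simp
      then show ?thesis using real nx by (simp add: less_divide_eq mult.commute)
    next
      case PInf then show ?thesis by simp
    next
      case MInf then show ?thesis using lt nx by simp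
    qed
  qed
  moreover have "c > 0" using c by simp
  moreover have "R \<ge> 1" unfolding R_def by simp
  ultimately show ?thesis using that by blast
qed

lemma nn_integral_h_finite:
  fixes p :: real
  assumes p: "p < -1"
  shows "(\<integral>\<^sup>+t. ennreal (max 1 \<bar>t\<bar> powr p) \<partial>lborel) < \<infinity>"
proof -
  define k :: "real \<Rightarrow> ennreal" where "k t = ennreal (t powr p) * indicator {1..} t" for t
  have [measurable]: "k \<in> borel_measurable borel" unfolding k_def by measurable
  have hk: "((\<lambda>t. t powr p) has_integral -(1 powr (p+1)) / (p+1)) {1..}"
    using has_integral_powr_to_inf[OF p, of 1] by simp
  have k1: "(\<integral>\<^sup>+t. k t \<partial>lborel) = ennreal (-(1 powr (p+1)) / (p+1))"
    unfolding k_def by (rule nn_integral_has_integral_lebesgue'[OF _ hk]) simp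
  have k2: "(\<integral>\<^sup>+t. k (- t) \<partial>lborel) = (\<integral>\<^sup>+t. k t \<partial>lborel)"
    using nn_integral_real_affine[of k "-1" 0] by simp
  have le: "ennreal (max 1 \<bar>t\<bar> powr p) \<le> indicator {-1..1} t + k t + k (- t)" for t
  proof (cases "\<bar>t\<bar> \<le> 1")
    case True
    then have "t \<in> {-1..1}" by auto
    then have "indicator {-1..1} t = (1::ennreal)" by simp
    moreover have "max 1 \<bar>t\<bar> = 1" using True by simp
    ultimately show ?thesis by (simp add: add_increasing2 add.assoc)
  next
    case False
    show ?thesis
    proof (cases "t > 1")
      case True
      then have "ennreal (max 1 \<bar>t\<bar> powr p) = k t" unfolding k_def by (simp add: indicator_def)
      then show ?thesis by (simp add: add_increasing2 add.commute add.left_commute)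
    next
      case False
      then have "t < -1" using \<open>\<not> \<bar>t\<bar> \<le> 1\<close> by simp
      then have "ennreal (max 1 \<bar>t\<bar> powr p) = k (- t)" unfolding k_def by (simp add: indicator_def)
      then show ?thesis by (simp add: add_increasing2)
    qed
  qed
  have s1: "(\<integral>\<^sup>+t. indicator {-1..1} t + k t + k (- t) \<partial>lborel) = (\<integral>\<^sup>+t. indicator {-1..1} t + k t \<partial>lborel) + (\<integral>\<^sup>+t. k (- t) \<partial>lborel)"
    by (rule nn_integral_add) measurable
  have s2: "(\<integral>\<^sup>+t. indicator {-1..1} t + k t \<partial>lborel) = (\<integral>\<^sup>+t. indicator {-1..1::real} t \<partial>lborel) + (\<integral>\<^sup>+t. k t \<partial>lborel)"
    using nn_integral_add[of "indicator {-1..1::real}" lborel k] by simp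
  have s3: "(\<integral>\<^sup>+t. indicator {-1..1::real} t \<partial>lborel) = ennreal 2"
    by simp
  have "(\<integral>\<^sup>+t. ennreal (max 1 \<bar>t\<bar> powr p) \<partial>lborel) \<le> (\<integral>\<^sup>+t. indicator {-1..1} t + k t + k (- t) \<partial>lborel)"
    by (rule nn_integral_mono) (rule le)
  also have "\<dots> = ennreal 2 + ennreal (-(1 powr (p+1)) / (p+1)) + ennreal (-(1 powr (p+1)) / (p+1))"
    unfolding s1 s2 s3 k1 k2 ..
  also have "\<dots> < \<infinity>" by (simp add: ennreal_plus[symmetric] del: ennreal_plus)
  finally show ?thesis .
qed

lemma alpha_fun_measurable[measurable]:
  assumes [measurable]: "\<phi> \<in> borel_measurable borel"
  shows "alpha_fun \<alpha> \<phi> \<in> borel_measurable borel"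
  unfolding alpha_fun_def[abs_def] by measurable

lemma alpha_fun_nonneg: "alpha_fun \<alpha> \<phi> x \<ge> 0"
  unfolding alpha_fun_def by simp

lemma alpha_fun_integrable:
  fixes \<phi> :: "'a::euclidean_space \<Rightarrow> ereal"
  assumes al: "- 1 / real DIM('a) < \<alpha>" "\<alpha> < 0" and nn: "\<And>x. \<phi> x \<ge> 0"
    and co: "coercive \<phi>" and [measurable]: "\<phi> \<in> borel_measurable borel"
  shows "integrable lborel (alpha_fun \<alpha> \<phi>)"
proof -
  obtain c R where c: "c > 0" "R \<ge> 1" "\<And>x. norm x \<ge> R \<Longrightarrow> ereal (c * norm x) \<le> \<phi> x"
    using coercive_bound[OF co] by blast
  define q where "q = 1 / \<alpha>"
  define n where "n = real DIM('a)"
  have n: "n \<ge> 1" unfolding n_def using DIM_positive[where 'a='a] by linarith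
  have "(- 1 / n) * n < \<alpha> * n" using al(1) n unfolding n_def by (intro mult_strict_right_mono) auto
  then have "- 1 < \<alpha> * n" using n by simp
  then have q: "q < - n" unfolding q_def using al(2) by (simp add: divide_less_eq algebra_simps)
  have q0: "q \<le> 0" using q n by simp
  define p where "p = q / n"
  have p: "p < -1" unfolding p_def using q n by (simp add: divide_less_eq)
  define K where "K = max ((- \<alpha> * c) powr q) (R powr (- q))"
  have K: "K \<ge> 0" unfolding K_def by (simp add: le_max_iff_disj)
  define h where "h t = max 1 \<bar>t\<bar> powr p" for t :: real
  have h_nn: "h t \<ge> 0" for t unfolding h_def by simp
  have [measurable]: "h \<in> borel_measurable borel" unfolding h_def[abs_def] by measurable
  have bound1: "alpha_fun \<alpha> \<phi> x \<le> K * max 1 (norm x) powr q" for x :: 'a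
  proof (cases "\<phi> x = \<infinity>")
    case True then show ?thesis using K by (simp add: alpha_fun_def)
  next
    case False
    define v where "v = real_of_ereal (\<phi> x)"
    have v: "\<phi> x = ereal v" "v \<ge> 0" using False nn[of x] unfolding v_def by (cases "\<phi> x"; auto)+
    have af: "alpha_fun \<alpha> \<phi> x = (1 - \<alpha> * v) powr q" using False v unfolding alpha_fun_def q_def by simp
    show ?thesis
    proof (cases "norm x \<ge> R")
      case True
      have cv: "c * norm x \<le> v" using c(3)[OF True] v by simp
      have nx: "norm x > 0" using True c(2) by linarith
      have pos: "0 < - \<alpha> * c * norm x" using al(2) c(1) nx by (intro mult_pos_pos) auto
      have "- \<alpha> * (c * norm x) \<le> - \<alpha> * v" using cv al(2) by (intro mult_left_mono) auto
      then have le: "- \<alpha> * c * norm x \<le> 1 - \<alpha> * v" by (simp add: algebra_simps)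
      have "(1 - \<alpha> * v) powr q \<le> (- \<alpha> * c * norm x) powr q"
        by (rule powr_mono2'[OF q0 pos le])
      also have "\<dots> = (- \<alpha> * c) powr q * norm x powr q"
        using al(2) c(1) by (subst powr_mult) auto
      also have "\<dots> \<le> K * norm x powr q" unfolding K_def by (intro mult_right_mono) auto
      also have "norm x = max 1 (norm x)" using True c(2) by simp
      finally show ?thesis using af by simp
    next
      case False
      have "(1 - \<alpha> * v) powr q \<le> 1 powr q"
        using v al(2) by (intro powr_mono2'[OF q0]) (auto simp: mult_nonpos_nonneg)
      also have "\<dots> = R powr (- q) * R powr q" using c(2) by (simp add: powr_add[symmetric])
      also have "\<dots> \<le> K * max 1 (norm x) powr q"
      proof (rule mult_mono)
        show "R powr - q \<le> K" unfolding K_def by simp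
        show "R powr q \<le> max 1 (norm x) powr q"
          using False c(2) by (intro powr_mono2'[OF q0]) auto
      qed (use K in auto)
      finally show ?thesis using af by simp
    qed
  qed
  have bound2: "max 1 (norm x) powr q \<le> (\<Prod>b\<in>Basis. h (x \<bullet> b))" for x :: 'a
  proof -
    have "(\<Prod>b\<in>Basis. max 1 \<bar>x \<bullet> b\<bar>) \<le> (\<Prod>b\<in>(Basis::'a set). max 1 (norm x))"
      by (intro prod_mono) (auto intro: max.coboundedI2 Basis_le_norm)
    also have "\<dots> = max 1 (norm x) ^ DIM('a)" by simp
    finally have le: "(\<Prod>b\<in>Basis. max 1 \<bar>x \<bullet> b\<bar>) \<le> max 1 (norm x) ^ DIM('a)" .
    have pos: "0 < (\<Prod>b\<in>(Basis::'a set). max 1 \<bar>x \<bullet> b\<bar>)" by (intro prod_pos) auto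
    have "max 1 (norm x) powr q = (max 1 (norm x) powr n) powr p"
      unfolding p_def powr_powr using n by simp
    also have "max 1 (norm x) powr n = max 1 (norm x) ^ DIM('a)"
      unfolding n_def by (rule powr_realpow) simp
    also have "(max 1 (norm x) ^ DIM('a)) powr p \<le> (\<Prod>b\<in>Basis. max 1 \<bar>x \<bullet> b\<bar>) powr p"
      using p by (intro powr_mono2'[OF _ pos le]) simp
    also have "\<dots> = (\<Prod>b\<in>Basis. h (x \<bullet> b))" unfolding h_def by (rule prod_powr_distrib)
    finally show ?thesis .
  qed
  have fin: "(\<integral>\<^sup>+x. ennreal (norm (\<Prod>b\<in>Basis. h (x \<bullet> b))) \<partial>(lborel::'a measure)) < \<infinity>"
  proof -
    have "(\<integral>\<^sup>+x. ennreal (norm (\<Prod>b\<in>Basis. h (x \<bullet> b))) \<partial>(lborel::'a measure)) = (\<integral>\<^sup>+x. (\<Prod>b\<in>Basis. ennreal (h (x \<bullet> b))) \<partial>(lborel::'a measure))"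
      by (rule nn_integral_cong) (simp add: h_nn prod_nonneg prod_ennreal)
    also have "\<dots> = (\<Prod>b\<in>(Basis::'a set). (\<integral>\<^sup>+t. ennreal (h t) \<partial>lborel))"
      by (rule nn_integral_lborel_prod) auto
    also have "\<dots> < \<infinity>"
    proof -
      have "(\<integral>\<^sup>+t. ennreal (h t) \<partial>lborel) < \<infinity>" unfolding h_def by (rule nn_integral_h_finite[OF p])
      then show ?thesis by (simp add: power_less_top_ennreal)
    qed
    finally show ?thesis .
  qed
  have int_prod: "integrable lborel (\<lambda>x::'a. \<Prod>b\<in>Basis. h (x \<bullet> b))"
    unfolding integrable_iff_bounded
  proof
    show "(\<lambda>x::'a. \<Prod>b\<in>Basis. h (x \<bullet> b)) \<in> borel_measurable lborel" by measurable
    show "(\<integral>\<^sup>+x. ennreal (norm (\<Prod>b\<in>Basis. h (x \<bullet> b))) \<partial>(lborel::'a measure)) < \<infinity>" by (rule fin)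
  qed
  show ?thesis
  proof (rule Bochner_Integration.integrable_bound)
    show "integrable lborel (\<lambda>x::'a. K * (\<Prod>b\<in>Basis. h (x \<bullet> b)))" using int_prod by simp
    show "alpha_fun \<alpha> \<phi> \<in> borel_measurable lborel" by measurable
    show "AE x in lborel. norm (alpha_fun \<alpha> \<phi> x) \<le> norm (K * (\<Prod>b\<in>Basis. h (x \<bullet> b)))"
    proof (rule AE_I2)
      fix x
      have "alpha_fun \<alpha> \<phi> x \<le> K * (\<Prod>b\<in>Basis. h (x \<bullet> b))"
        using bound1[of x] mult_left_mono[OF bound2[of x] K] by linarith
      then show "norm (alpha_fun \<alpha> \<phi> x) \<le> norm (K * (\<Prod>b\<in>Basis. h (x \<bullet> b)))"
        using alpha_fun_nonneg[of \<alpha> \<phi> x] K h_nn by (simp add: prod_nonneg)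
    qed
  qed
qed

lemma base_deriv:
  fixes A B q s :: real
  assumes "A + B * s > 0"
  shows "((\<lambda>t. (A + B * t) powr q) has_real_derivative q * (A + B * s) powr (q - 1) * B) (at s)"
proof -
  have "((\<lambda>t. A + B * t) has_real_derivative B) (at s)"
    by (auto intro!: derivative_eq_intros)
  from DERIV_fun_powr[OF this assms, of q] show ?thesis by simp
qed

lemma pointwise_quot:
  fixes \<alpha> \<beta>1 \<beta>2 P :: real
  assumes al: "\<alpha> < 0" and b1: "\<beta>1 \<ge> 0" and P: "P \<ge> 0"
  defines "u \<equiv> \<lambda>t. (1 - \<alpha> * (1 + \<beta>1 * t) * P + \<alpha> * \<beta>2 * t) powr (1 / \<alpha>)"
  shows "((\<lambda>t. (u t - u 0) / t) \<longlongrightarrow> (\<beta>2 - \<beta>1 * P) * (1 - \<alpha> * P) powr (1 / \<alpha> - 1)) (at_right 0)"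
    and "\<And>t. 0 < t \<Longrightarrow> t * \<bar>\<alpha>\<bar> * \<bar>\<beta>2\<bar> \<le> 1 / 2 \<Longrightarrow>
          \<bar>(u t - u 0) / t\<bar> \<le> 2 powr (1 - 1 / \<alpha>) * (\<bar>\<beta>2\<bar> + \<beta>1 / (- \<alpha>)) * u 0"
proof -
  define A where "A = 1 - \<alpha> * P"
  define B where "B = \<alpha> * \<beta>2 - \<alpha> * \<beta>1 * P"
  define q where "q = 1 / \<alpha>"
  have uAB: "u = (\<lambda>t. (A + B * t) powr q)"
    unfolding u_def A_def B_def q_def by (rule ext) (simp add: algebra_simps)
  have A1: "A \<ge> 1" unfolding A_def using al P by (simp add: mult_nonpos_nonneg)
  have qB: "q * B = \<beta>2 - \<beta>1 * P" unfolding q_def B_def using al by (simp add: field_simps)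
  have u0: "u 0 = A powr q" unfolding uAB by simp
  have D0: "(u has_real_derivative q * A powr (q - 1) * B) (at 0)"
    unfolding uAB using base_deriv[of A B 0 q] A1 by simp
  then have "((\<lambda>t. (u t - u 0) / (t - 0)) \<longlongrightarrow> q * A powr (q - 1) * B) (at 0)"
    using has_field_derivative_iff by blast
  then have "((\<lambda>t. (u t - u 0) / t) \<longlongrightarrow> q * A powr (q - 1) * B) (at_right 0)"
    using filterlim_at_split by force
  moreover have "q * A powr (q - 1) * B = (\<beta>2 - \<beta>1 * P) * (1 - \<alpha> * P) powr (1 / \<alpha> - 1)"
  proof -
    have "q * A powr (q - 1) * B = (q * B) * A powr (q - 1)" by (simp add: algebra_simps)
    then show ?thesis unfolding qB by (simp add: A_def q_def)
  qed
  ultimately show "((\<lambda>t. (u t - u 0) / t) \<longlongrightarrow> (\<beta>2 - \<beta>1 * P) * (1 - \<alpha> * P) powr (1 / \<alpha> - 1)) (at_right 0)"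
    by simp
  fix t :: real
  assume t: "0 < t" and tsmall: "t * \<bar>\<alpha>\<bar> * \<bar>\<beta>2\<bar> \<le> 1 / 2"
  have half: "A + B * x \<ge> A / 2" if "0 \<le> x" "x \<le> t" for x
  proof -
    have "0 \<le> (- \<alpha>) * \<beta>1 * P * x" using al b1 P that by (intro mult_nonneg_nonneg) auto
    moreover have "\<bar>\<alpha> * \<beta>2 * x\<bar> \<le> t * \<bar>\<alpha>\<bar> * \<bar>\<beta>2\<bar>"
    proof -
      have "\<bar>\<alpha> * \<beta>2 * x\<bar> = (\<bar>\<alpha>\<bar> * \<bar>\<beta>2\<bar>) * x" using that by (simp add: abs_mult)
      also have "\<dots> \<le> (\<bar>\<alpha>\<bar> * \<bar>\<beta>2\<bar>) * t" using that by (intro mult_left_mono) auto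
      finally show ?thesis by (simp add: algebra_simps)
    qed
    ultimately have "A + B * x \<ge> A - 1 / 2" using tsmall unfolding B_def by (simp add: algebra_simps abs_le_iff)
    then show ?thesis using A1 by linarith
  qed
  have der: "(u has_real_derivative q * (A + B * x) powr (q - 1) * B) (at x)" if "0 \<le> x" "x \<le> t" for x
    unfolding uAB using base_deriv[of A B x q] half[OF that] A1 by simp
  obtain z where z: "0 < z" "z < t" "u t - u 0 = (t - 0) * (q * (A + B * z) powr (q - 1) * B)"
    using MVT2[OF t der] by blast
  have "(u t - u 0) / t = (q * B) * (A + B * z) powr (q - 1)"
    using z(3) t by (simp add: field_simps)
  then have "(u t - u 0) / t = (\<beta>2 - \<beta>1 * P) * (A + B * z) powr (q - 1)"
    unfolding qB .
  then have "\<bar>(u t - u 0) / t\<bar> = \<bar>\<beta>2 - \<beta>1 * P\<bar> * (A + B * z) powr (q - 1)"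
    by (simp add: abs_mult)
  also have "\<dots> \<le> (\<bar>\<beta>2\<bar> + \<beta>1 * P) * (A / 2) powr (q - 1)"
  proof (rule mult_mono)
    have "0 \<le> \<beta>1 * P" using b1 P by simp
    then show "\<bar>\<beta>2 - \<beta>1 * P\<bar> \<le> \<bar>\<beta>2\<bar> + \<beta>1 * P" by linarith
    have "q - 1 \<le> 0" unfolding q_def using al by (simp add: divide_nonpos_neg)
    then show "(A + B * z) powr (q - 1) \<le> (A / 2) powr (q - 1)"
      using half[of z] z A1 by (intro powr_mono2') auto
  qed (use b1 P in auto)
  also have "(A / 2) powr (q - 1) = 2 powr (1 - q) * A powr (q - 1)"
    by (simp add: powr_divide powr_diff divide_simps)
  also have "\<bar>\<beta>2\<bar> + \<beta>1 * P \<le> (\<bar>\<beta>2\<bar> + \<beta>1 / (- \<alpha>)) * A"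
  proof -
    have "P \<le> A / (- \<alpha>)" unfolding A_def using al by (simp add: field_simps)
    then have "\<beta>1 * P \<le> \<beta>1 * (A / (- \<alpha>))" using b1 by (intro mult_left_mono) auto
    moreover have "\<bar>\<beta>2\<bar> \<le> \<bar>\<beta>2\<bar> * A" using A1 by (simp add: mult_le_cancel_left1)
    ultimately show ?thesis by (simp add: algebra_simps)
  qed
  ultimately have "\<bar>(u t - u 0) / t\<bar> \<le> (\<bar>\<beta>2\<bar> + \<beta>1 / (- \<alpha>)) * A * (2 powr (1 - q) * A powr (q - 1))"
    by (smt (verit) mult_right_mono powr_ge_zero mult_nonneg_nonneg)
  also have "\<dots> = 2 powr (1 - q) * (\<bar>\<beta>2\<bar> + \<beta>1 / (- \<alpha>)) * (A * A powr (q - 1))"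
    by (simp add: algebra_simps)
  also have "A * A powr (q - 1) = A powr q" using A1 by (simp add: powr_diff)
  finally show "\<bar>(u t - u 0) / t\<bar> \<le> 2 powr (1 - 1 / \<alpha>) * (\<bar>\<beta>2\<bar> + \<beta>1 / (- \<alpha>)) * u 0"
    unfolding u0 q_def .
qed

definition Bf :: "real \<Rightarrow> ('a \<Rightarrow> ereal) \<Rightarrow> 'a \<Rightarrow> real" where
  "Bf \<alpha> \<phi> x = (if \<phi> x = \<infinity> then 0
     else real_of_ereal (\<phi> x) * (1 - \<alpha> * real_of_ereal (\<phi> x)) powr (1 / \<alpha> - 1))"

lemma main_limit:
  fixes \<phi> :: "'a::euclidean_space \<Rightarrow> ereal" and \<alpha> \<beta>1 \<beta>2 :: real
  assumes al: "\<alpha> < 0" and b1: "\<beta>1 \<ge> 0" and nn: "\<And>x. \<phi> x \<ge> 0"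
    and [measurable]: "\<phi> \<in> borel_measurable borel" and intF: "integrable lborel (alpha_fun \<alpha> \<phi>)"
  shows "(\<forall>\<^sub>F t in at_right 0. integrable lborel (\<lambda>x. (fhat \<alpha> \<beta>1 \<beta>2 \<phi> t x - alpha_fun \<alpha> \<phi> x) / t))
     \<and> ((\<lambda>t. \<integral>x. (fhat \<alpha> \<beta>1 \<beta>2 \<phi> t x - alpha_fun \<alpha> \<phi> x) / t \<partial>lborel) \<longlongrightarrow>
        \<beta>2 * (\<integral>x. alpha_fun \<alpha> \<phi> x powr (1 - \<alpha>) \<partial>lborel)
        + \<beta>1 * (real DIM('a) * (\<integral>x. alpha_fun \<alpha> \<phi> x \<partial>lborel) - (\<integral>x. Bf \<alpha> \<phi> x \<partial>lborel))) (at_right 0)"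
proof -
  define F where "F = alpha_fun \<alpha> \<phi>"
  define P where "P = (\<lambda>y. real_of_ereal (\<phi> y))"
  have P_nn: "P y \<ge> 0" for y unfolding P_def using nn[of y] by (simp add: real_of_ereal_pos)
  define H where "H = (\<lambda>t y. if \<phi> y = \<infinity> then 0
       else (1 - \<alpha> * (1 + \<beta>1 * t) * real_of_ereal (\<phi> y) + \<alpha> * \<beta>2 * t) powr (1 / \<alpha>))"
  define Dl where "Dl = (\<lambda>y. if \<phi> y = \<infinity> then 0
       else (\<beta>2 - \<beta>1 * P y) * (1 - \<alpha> * P y) powr (1 / \<alpha> - 1))"
  define C where "C = 2 powr (1 - 1 / \<alpha>) * (\<bar>\<beta>2\<bar> + \<beta>1 / (- \<alpha>))"
  define t0 where "t0 = 1 / (2 * (\<bar>\<alpha>\<bar> * \<bar>\<beta>2\<bar> + 1))"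
  have pos2: "0 < 2 * (\<bar>\<alpha>\<bar> * \<bar>\<beta>2\<bar> + 1)"
  proof -
    have "0 \<le> \<bar>\<alpha>\<bar> * \<bar>\<beta>2\<bar>" by simp
    then have "0 < \<bar>\<alpha>\<bar> * \<bar>\<beta>2\<bar> + 1" by linarith
    then show ?thesis by simp
  qed
  have t0: "t0 > 0" unfolding t0_def using pos2 by simp
  have t0small: "t * \<bar>\<alpha>\<bar> * \<bar>\<beta>2\<bar> \<le> 1 / 2" if "0 < t" "t \<le> t0" for t
  proof -
    have "t * (\<bar>\<alpha>\<bar> * \<bar>\<beta>2\<bar>) \<le> t0 * (\<bar>\<alpha>\<bar> * \<bar>\<beta>2\<bar> + 1)"
      using that by (intro mult_mono) auto
    also have "\<dots> = 1 / 2" unfolding t0_def using pos2 by (simp add: field_simps)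
    finally show ?thesis by (simp add: mult.assoc)
  qed
  have "\<beta>1 / (- \<alpha>) \<ge> 0" using al b1 by (intro divide_nonneg_pos) auto
  then have C: "C \<ge> 0" unfolding C_def by (intro mult_nonneg_nonneg) auto
  have [measurable]: "F \<in> borel_measurable borel" unfolding F_def by measurable
  have Hm[measurable]: "H t \<in> borel_measurable borel" for t unfolding H_def by measurable
  have [measurable]: "Dl \<in> borel_measurable borel" unfolding Dl_def P_def by measurable
  have F_nn: "F y \<ge> 0" for y unfolding F_def by (rule alpha_fun_nonneg)
  have pw_lim: "((\<lambda>t. (H t y - F y) / t) \<longlongrightarrow> Dl y) (at_right 0)" for y
  proof (cases "\<phi> y = \<infinity>")
    case True then show ?thesis by (simp add: H_def F_def alpha_fun_def Dl_def)
  next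
    case False
    have "H t y = (1 - \<alpha> * (1 + \<beta>1 * t) * P y + \<alpha> * \<beta>2 * t) powr (1 / \<alpha>)" for t
      using False by (simp add: H_def P_def)
    moreover have "F y = (1 - \<alpha> * (1 + \<beta>1 * 0) * P y + \<alpha> * \<beta>2 * 0) powr (1 / \<alpha>)"
      using False by (simp add: F_def alpha_fun_def P_def)
    moreover have "Dl y = (\<beta>2 - \<beta>1 * P y) * (1 - \<alpha> * P y) powr (1 / \<alpha> - 1)"
      using False by (simp add: Dl_def)
    ultimately show ?thesis using pointwise_quot(1)[OF al b1 P_nn[of y], of \<beta>2] by simp
  qed
  have pw_bound: "\<bar>(H t y - F y) / t\<bar> \<le> C * F y" if "0 < t" "t \<le> t0" for t y
  proof (cases "\<phi> y = \<infinity>")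
    case True then show ?thesis by (simp add: H_def F_def alpha_fun_def)
  next
    case False
    have "H t y = (1 - \<alpha> * (1 + \<beta>1 * t) * P y + \<alpha> * \<beta>2 * t) powr (1 / \<alpha>)"
      using False by (simp add: H_def P_def)
    moreover have "F y = (1 - \<alpha> * (1 + \<beta>1 * 0) * P y + \<alpha> * \<beta>2 * 0) powr (1 / \<alpha>)"
      using False by (simp add: F_def alpha_fun_def P_def)
    ultimately show ?thesis
      using pointwise_quot(2)[OF al b1 P_nn[of y], of t \<beta>2] that t0small[OF that]
      unfolding C_def by simp
  qed
  have intCF: "integrable lborel (\<lambda>y. C * F y)" using intF unfolding F_def by simp
  have intQ: "integrable lborel (\<lambda>y. (H t y - F y) / t)" if "0 < t" "t \<le> t0" for t
  proof (rule Bochner_Integration.integrable_bound[OF intCF])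
    show "(\<lambda>y. (H t y - F y) / t) \<in> borel_measurable lborel" by measurable
    show "AE y in lborel. norm ((H t y - F y) / t) \<le> norm (C * F y)"
      using pw_bound[OF that] C F_nn by (intro AE_I2) (simp add: abs_mult)
  qed
  define s where "s = (\<lambda>\<tau> y. (H (inverse \<tau>) y - F y) / inverse \<tau>)"
  have s_m: "s \<tau> \<in> borel_measurable lborel" for \<tau> unfolding s_def by measurable
  have s_lim: "AE y in lborel. ((\<lambda>\<tau>. s \<tau> y) \<longlongrightarrow> Dl y) at_top"
    using pw_lim unfolding s_def filterlim_at_right_to_top by (intro AE_I2) simp
  have s_bound: "\<forall>\<^sub>F \<tau> in at_top. AE y in lborel. norm (s \<tau> y) \<le> C * F y"
  proof -
    have "\<forall>\<^sub>F \<tau> in at_top. \<tau> \<ge> 1 / t0" by (rule eventually_ge_at_top)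
    then show ?thesis
    proof eventually_elim
      case (elim \<tau>)
      have "\<tau> > 0" using elim t0 by (meson less_le_trans zero_less_divide_1_iff)
      then have "0 < inverse \<tau>" "inverse \<tau> \<le> t0"
        using elim t0 by (auto simp: inverse_eq_divide divide_le_eq mult.commute)
      then show ?case unfolding s_def using pw_bound by (intro AE_I2) simp
    qed
  qed
  have limQ': "((\<lambda>\<tau>. integral\<^sup>L lborel (s \<tau>)) \<longlongrightarrow> integral\<^sup>L lborel Dl) at_top"
    by (rule integral_dominated_convergence_at_top[OF _ s_m intCF s_lim s_bound]) measurable
  have intDl: "integrable lborel Dl"
    by (rule integrable_dominated_convergence_at_top[OF _ s_m intCF s_lim s_bound]) measurable
  define Q where "Q = (\<lambda>t. \<integral>y. (H t y - F y) / t \<partial>lborel)"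
  have limQ: "(Q \<longlongrightarrow> integral\<^sup>L lborel Dl) (at_right 0)"
    unfolding filterlim_at_right_to_top using limQ' unfolding s_def Q_def .
  have ev: "\<forall>\<^sub>F t in at_right 0. 0 < t \<and> t \<le> t0"
    unfolding eventually_at_right_field using t0 by (intro exI[of _ t0]) auto
  have fhat_eq: "fhat \<alpha> \<beta>1 \<beta>2 \<phi> t = (\<lambda>x. H t (inverse (1 + \<beta>1 * t) *\<^sub>R x))" for t
    unfolding fhat_def H_def by (rule ext) simp
  define J where "J = integral\<^sup>L lborel F"
  define n where "n = DIM('a)"
  have intH: "integrable lborel (H t)" if "0 < t" "t \<le> t0" for t
  proof -
    have "H t = (\<lambda>y. F y + t * ((H t y - F y) / t))" using that by (auto simp: fun_eq_iff)
    moreover have "integrable lborel (\<lambda>y. F y + t * ((H t y - F y) / t))"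
      by (rule Bochner_Integration.integrable_add[OF _ Bochner_Integration.integrable_mult_right[OF intQ[OF that]]])
        (use intF in \<open>simp add: F_def\<close>)
    ultimately show ?thesis by simp
  qed
  have sc: "1 + \<beta>1 * t \<ge> 1" if "0 < t" for t using b1 that by simp
  have intfhat: "integrable lborel (fhat \<alpha> \<beta>1 \<beta>2 \<phi> t)" if "0 < t" "t \<le> t0" for t
    unfolding fhat_eq using integrable_scale[OF _ intH[OF that], of "inverse (1 + \<beta>1 * t)"] sc[OF that(1)]
    by simp
  have int_fhat_val: "integral\<^sup>L lborel (fhat \<alpha> \<beta>1 \<beta>2 \<phi> t) = (1 + \<beta>1 * t) ^ n * integral\<^sup>L lborel (H t)"
    if "0 < t" for t
  proof -
    have ne: "inverse (1 + \<beta>1 * t) \<noteq> 0" using sc[OF that] by simp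
    have "integral\<^sup>L lborel (H t) = \<bar>inverse (1 + \<beta>1 * t)\<bar> ^ n * integral\<^sup>L lborel (fhat \<alpha> \<beta>1 \<beta>2 \<phi> t)"
      unfolding fhat_eq n_def by (rule integral_scale[OF ne])
    also have "\<bar>inverse (1 + \<beta>1 * t)\<bar> ^ n = inverse ((1 + \<beta>1 * t) ^ n)"
      using sc[OF that] by (simp add: power_inverse)
    finally show ?thesis using sc[OF that] by (simp add: field_simps)
  qed
  have Qeq: "integral\<^sup>L lborel (H t) = J + t * Q t" if "0 < t" "t \<le> t0" for t
  proof -
    have "Q t = (integral\<^sup>L lborel (H t) - J) / t"
      unfolding Q_def J_def using intH[OF that] intF unfolding F_def by simp
    then show ?thesis using that by (simp add: field_simps)
  qed
  have valeq: "(\<integral>x. (fhat \<alpha> \<beta>1 \<beta>2 \<phi> t x - F x) / t \<partial>lborel)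
      = (((1 + \<beta>1 * t) ^ n - 1) / t) * (J + t * Q t) + Q t" if "0 < t" "t \<le> t0" for t
  proof -
    have "(\<integral>x. (fhat \<alpha> \<beta>1 \<beta>2 \<phi> t x - F x) / t \<partial>lborel)
        = (integral\<^sup>L lborel (fhat \<alpha> \<beta>1 \<beta>2 \<phi> t) - J) / t"
      unfolding J_def using intfhat[OF that] intF unfolding F_def by simp
    also have "\<dots> = ((1 + \<beta>1 * t) ^ n * (J + t * Q t) - J) / t"
      using int_fhat_val[OF that(1)] Qeq[OF that] by simp
    also have "\<dots> = (((1 + \<beta>1 * t) ^ n - 1) / t) * (J + t * Q t) + Q t"
      using that by (simp add: field_simps)
    finally show ?thesis .
  qed
  have L1: "((\<lambda>t. ((1 + \<beta>1 * t) ^ n - 1) / t) \<longlongrightarrow> real n * \<beta>1) (at_right 0)"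
  proof -
    have "((\<lambda>t. (1 + \<beta>1 * t) ^ n) has_real_derivative real n * \<beta>1) (at 0)"
      by (auto intro!: derivative_eq_intros)
    from has_field_derivative_iff[THEN iffD1, OF this]
    have "((\<lambda>t. ((1 + \<beta>1 * t) ^ n - 1) / t) \<longlongrightarrow> real n * \<beta>1) (at 0)" by simp
    then show ?thesis using filterlim_at_split by force
  qed
  have L3: "((\<lambda>t. J + t * Q t) \<longlongrightarrow> J) (at_right 0)"
  proof -
    have "((\<lambda>t. J + t * Q t) \<longlongrightarrow> J + 0 * integral\<^sup>L lborel Dl) (at_right 0)"
      by (intro tendsto_intros limQ)
    then show ?thesis by simp
  qed
  have Llim: "((\<lambda>t. (((1 + \<beta>1 * t) ^ n - 1) / t) * (J + t * Q t) + Q t) \<longlongrightarrow>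
      real n * \<beta>1 * J + integral\<^sup>L lborel Dl) (at_right 0)"
    by (intro tendsto_intros L1 L3 limQ)
  have Llim2: "((\<lambda>t. \<integral>x. (fhat \<alpha> \<beta>1 \<beta>2 \<phi> t x - F x) / t \<partial>lborel) \<longlongrightarrow>
      real n * \<beta>1 * J + integral\<^sup>L lborel Dl) (at_right 0)"
  proof (rule tendsto_cong[THEN iffD1, OF _ Llim])
    show "\<forall>\<^sub>F t in at_right 0. (((1 + \<beta>1 * t) ^ n - 1) / t) * (J + t * Q t) + Q t =
        (\<integral>x. (fhat \<alpha> \<beta>1 \<beta>2 \<phi> t x - F x) / t \<partial>lborel)"
      using ev
    proof eventually_elim
      case (elim t)
      then have "0 < t" "t \<le> t0" by auto
      from valeq[OF this] show ?case by (rule sym)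
    qed
  qed
  define G where "G = (\<lambda>y. F y powr (1 - \<alpha>))"
  have [measurable]: "G \<in> borel_measurable borel" unfolding G_def by measurable
  have [measurable]: "Bf \<alpha> \<phi> \<in> borel_measurable borel" unfolding Bf_def[abs_def] by measurable
  have ptw: "G y \<le> F y \<and> 0 \<le> G y \<and> Bf \<alpha> \<phi> y \<le> F y / (- \<alpha>) \<and> 0 \<le> Bf \<alpha> \<phi> y
      \<and> Dl y = \<beta>2 * G y - \<beta>1 * Bf \<alpha> \<phi> y" for y
  proof (cases "\<phi> y = \<infinity>")
    case True then show ?thesis by (simp add: G_def F_def alpha_fun_def Bf_def Dl_def)
  next
    case False
    define A where "A = 1 - \<alpha> * P y"
    have A1: "A \<ge> 1" unfolding A_def using al P_nn[of y] by (simp add: mult_nonpos_nonneg)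
    have q0: "1 / \<alpha> \<le> 0" "1 / \<alpha> - 1 \<le> 0" using al by (auto simp: divide_nonpos_neg)
    have Fy: "F y = A powr (1 / \<alpha>)" using False unfolding F_def alpha_fun_def A_def P_def by simp
    have Fpos: "F y > 0" using Fy A1 by simp
    have Fle1: "F y \<le> 1"
    proof -
      have "A powr (1 / \<alpha>) \<le> 1 powr (1 / \<alpha>)" using A1 by (intro powr_mono2'[OF q0(1)]) auto
      then show ?thesis using Fy by simp
    qed
    have GF: "G y \<le> F y" unfolding G_def using Fpos Fle1 al by (intro powr_le_one_le) auto
    have Gy: "G y = A powr (1 / \<alpha> - 1)"
    proof -
      have "G y = A powr (1 / \<alpha> * (1 - \<alpha>))" unfolding G_def Fy powr_powr ..
      also have "1 / \<alpha> * (1 - \<alpha>) = 1 / \<alpha> - 1" using al by (simp add: field_simps)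
      finally show ?thesis .
    qed
    have By: "Bf \<alpha> \<phi> y = P y * A powr (1 / \<alpha> - 1)" using False unfolding Bf_def A_def P_def by simp
    have PA: "P y \<le> A / (- \<alpha>)" unfolding A_def using al by (simp add: field_simps)
    have "Bf \<alpha> \<phi> y \<le> (A / (- \<alpha>)) * A powr (1 / \<alpha> - 1)"
      unfolding By using PA by (intro mult_right_mono) auto
    also have "\<dots> = (A * A powr (1 / \<alpha> - 1)) / (- \<alpha>)" by simp
    also have "A * A powr (1 / \<alpha> - 1) = F y" unfolding Fy using A1 by (simp add: powr_diff)
    finally have BF: "Bf \<alpha> \<phi> y \<le> F y / (- \<alpha>)" .
    have "Dl y = \<beta>2 * G y - \<beta>1 * Bf \<alpha> \<phi> y"
      unfolding Dl_def Gy By A_def using False by (simp add: algebra_simps)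
    then show ?thesis using GF BF By Gy P_nn[of y] A1 by simp
  qed
  have intG: "integrable lborel G"
  proof (rule Bochner_Integration.integrable_bound[OF intF])
    show "G \<in> borel_measurable lborel" by measurable
    show "AE x in lborel. norm (G x) \<le> norm (alpha_fun \<alpha> \<phi> x)"
      using ptw F_nn unfolding F_def by (intro AE_I2) simp
  qed
  have intB: "integrable lborel (Bf \<alpha> \<phi>)"
  proof (rule Bochner_Integration.integrable_bound)
    show "integrable lborel (\<lambda>x. F x / (- \<alpha>))" using intF unfolding F_def by simp
    show "Bf \<alpha> \<phi> \<in> borel_measurable lborel" by measurable
    show "AE x in lborel. norm (Bf \<alpha> \<phi> x) \<le> norm (F x / (- \<alpha>))"
      using ptw F_nn al by (intro AE_I2) (simp add: divide_nonneg_pos)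
  qed
  have "integral\<^sup>L lborel Dl = (\<integral>y. \<beta>2 * G y - \<beta>1 * Bf \<alpha> \<phi> y \<partial>lborel)"
    using ptw by (intro Bochner_Integration.integral_cong) auto
  also have "\<dots> = \<beta>2 * integral\<^sup>L lborel G - \<beta>1 * integral\<^sup>L lborel (Bf \<alpha> \<phi>)"
    using intG intB by simp
  finally have Dlval: "integral\<^sup>L lborel Dl = \<beta>2 * integral\<^sup>L lborel G - \<beta>1 * integral\<^sup>L lborel (Bf \<alpha> \<phi>)" .
  have fin_eq: "real n * \<beta>1 * J + integral\<^sup>L lborel Dl =
      \<beta>2 * (\<integral>x. alpha_fun \<alpha> \<phi> x powr (1 - \<alpha>) \<partial>lborel)
        + \<beta>1 * (real DIM('a) * (\<integral>x. alpha_fun \<alpha> \<phi> x \<partial>lborel) - (\<integral>x. Bf \<alpha> \<phi> x \<partial>lborel))"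
    unfolding Dlval G_def F_def J_def n_def by (simp add: algebra_simps)
  have evint: "\<forall>\<^sub>F t in at_right 0. integrable lborel (\<lambda>x. (fhat \<alpha> \<beta>1 \<beta>2 \<phi> t x - alpha_fun \<alpha> \<phi> x) / t)"
    using ev
  proof eventually_elim
    case (elim t)
    then show ?case using intfhat[of t] intF by auto
  qed
  show ?thesis using evint Llim2 fin_eq unfolding F_def by simp
qed

lemma legendre_gt_minf:
  assumes "\<phi> x0 < \<infinity>" "\<phi> x0 \<ge> 0"
  shows "legendre \<phi> y \<noteq> - \<infinity>"
proof -
  have "ereal (x0 \<bullet> y) - \<phi> x0 \<le> legendre \<phi> y" by (rule legendre_ge)
  moreover have "ereal (x0 \<bullet> y) - \<phi> x0 \<noteq> - \<infinity>" using assms by (cases "\<phi> x0") auto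
  ultimately show ?thesis by auto
qed

lemma term_scale:
  fixes g :: ereal and t a :: real
  assumes "g \<noteq> - \<infinity>" "t \<ge> 0"
  shows "ereal a - (g + ereal t * g) = ereal (1 + t) * (ereal (a / (1 + t)) - g)"
proof (cases g)
  case (real r)
  have "a - (r + t * r) = (1 + t) * (a / (1 + t) - r)" using assms(2) by (simp add: field_simps)
  then show ?thesis using real by simp
next
  case PInf
  then show ?thesis using assms(2) by (cases "t = 0") auto
next
  case MInf then show ?thesis using assms by simp
qed

lemma alpha_sum_fhat:
  fixes \<phi> :: "'a::euclidean_space \<Rightarrow> ereal"
  assumes cv: "convex_efun \<phi>" and lsc: "lsc_efun \<phi>" and nn: "\<And>x. \<phi> x \<ge> 0"
    and pr: "\<phi> x0 < \<infinity>" and t: "t \<ge> 0"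
  shows "alpha_sum \<alpha> \<phi> t \<phi> = fhat \<alpha> 1 0 \<phi> t"
proof (rule ext)
  fix x
  have L: "legendre (\<lambda>y. legendre \<phi> y + ereal t * legendre \<phi> y) x = ereal (1 + t) * \<phi> (x /\<^sub>R (1 + t))"
  proof -
    have eq: "ereal (y \<bullet> x) - (legendre \<phi> y + ereal t * legendre \<phi> y)
          = ereal (1 + t) * (ereal ((x /\<^sub>R (1 + t)) \<bullet> y) - legendre \<phi> y)" for y
      using term_scale[OF legendre_gt_minf[of \<phi> x0, OF pr nn[of x0]] t, of "y \<bullet> x"] by (simp add: divide_inverse mult.commute inner_commute)
    have "legendre (\<lambda>y. legendre \<phi> y + ereal t * legendre \<phi> y) x
        = (SUP y. ereal (1 + t) * (ereal ((x /\<^sub>R (1 + t)) \<bullet> y) - legendre \<phi> y))"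
      unfolding legendre_def[of "\<lambda>y. legendre \<phi> y + ereal t * legendre \<phi> y"] eq ..
    also have "\<dots> = ereal (1 + t) * (SUP y. ereal ((x /\<^sub>R (1 + t)) \<bullet> y) - legendre \<phi> y)"
      using t by (subst Sup_ereal_mult_left') auto
    also have "(SUP y. ereal ((x /\<^sub>R (1 + t)) \<bullet> y) - legendre \<phi> y) = legendre (legendre \<phi>) (x /\<^sub>R (1 + t))"
      unfolding legendre_def[of "legendre \<phi>"] by (simp add: inner_commute)
    also have "\<dots> = \<phi> (x /\<^sub>R (1 + t))" by (rule fenchel_moreau[OF cv lsc nn pr])
    finally show ?thesis .
  qed
  show "alpha_sum \<alpha> \<phi> t \<phi> x = fhat \<alpha> 1 0 \<phi> t x"
    unfolding alpha_sum_def alpha_fun_def L fhat_def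
    using t nn[of "x /\<^sub>R (1 + t)"]
    by (cases "\<phi> (x /\<^sub>R (1 + t))") (auto simp: algebra_simps)
qed

theorem theorem3p3:
  fixes \<phi> :: "'a::euclidean_space \<Rightarrow> ereal"
    and \<alpha> \<beta>1 \<beta>2 :: real
  assumes "- 1 / real DIM('a) < \<alpha>" and "\<alpha> < 0"
    and "\<beta>1 \<ge> 0"
    and "\<phi> \<in> Cplus_phi"
    and "0 \<in> interior (Ksupp \<phi>)"
  shows "(\<forall>\<^sub>F t in at_right 0.
            integrable lborel (\<lambda>x. (fhat \<alpha> \<beta>1 \<beta>2 \<phi> t x - alpha_fun \<alpha> \<phi> x) / t))
       \<and> ((\<lambda>t. \<integral>x. (fhat \<alpha> \<beta>1 \<beta>2 \<phi> t x - alpha_fun \<alpha> \<phi> x) / t \<partial>lborel)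
           \<longlongrightarrow> \<beta>2 * (\<integral>x. alpha_fun \<alpha> \<phi> x powr (1 - \<alpha>) \<partial>lborel)
               + \<beta>1 * deltaJ \<alpha> \<phi> \<phi>) (at_right 0)"
proof -
  have Cv: "\<phi> \<in> Conv" and nn: "\<And>x. \<phi> x \<ge> 0" and co: "coercive \<phi>"
    using assms(4) unfolding Cplus_phi_def by auto
  then have pf: "proper_fun \<phi>" and cv: "convex_efun \<phi>" and lsc: "lsc_efun \<phi>"
    unfolding Conv_def by auto
  obtain x0 where pr: "\<phi> x0 < \<infinity>" using pf unfolding proper_fun_def by auto
  have meas[measurable]: "\<phi> \<in> borel_measurable borel" by (rule lsc_measurable[OF lsc])
  have intF: "integrable lborel (alpha_fun \<alpha> \<phi>)"
    by (rule alpha_fun_integrable[OF assms(1,2) nn co meas])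
  note m1 = main_limit[OF assms(2) assms(3) nn meas intF, of \<beta>2]
  have one: "(1::real) \<ge> 0" by simp
  note m0 = main_limit[OF assms(2) one nn meas intF, of 0]
  define L0 where "L0 = real DIM('a) * (\<integral>x. alpha_fun \<alpha> \<phi> x \<partial>lborel) - (\<integral>x. Bf \<alpha> \<phi> x \<partial>lborel)"
  have ev0: "\<forall>\<^sub>F t in at_right 0. (0::real) < t"
    unfolding eventually_at_right_field by (intro exI[of _ 1]) auto
  have lim0: "((\<lambda>t. \<integral>x. (fhat \<alpha> 1 0 \<phi> t x - alpha_fun \<alpha> \<phi> x) / t \<partial>lborel) \<longlongrightarrow> L0) (at_right 0)"
    using m0 unfolding L0_def by simp
  have lim: "((\<lambda>t. (J (alpha_sum \<alpha> \<phi> t \<phi>) - J (alpha_fun \<alpha> \<phi>)) / t) \<longlongrightarrow> L0) (at_right 0)"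
  proof (rule tendsto_cong[THEN iffD1, OF _ lim0])
    have "\<forall>\<^sub>F t in at_right 0. 0 < t \<and> integrable lborel (\<lambda>x. (fhat \<alpha> 1 0 \<phi> t x - alpha_fun \<alpha> \<phi> x) / t)"
      using ev0 m0 by (simp add: eventually_conj_iff)
    then show "\<forall>\<^sub>F t in at_right 0. (\<integral>x. (fhat \<alpha> 1 0 \<phi> t x - alpha_fun \<alpha> \<phi> x) / t \<partial>lborel) =
        (J (alpha_sum \<alpha> \<phi> t \<phi>) - J (alpha_fun \<alpha> \<phi>)) / t"
    proof eventually_elim
      case (elim t)
      then have t: "t > 0" and it: "integrable lborel (\<lambda>x. (fhat \<alpha> 1 0 \<phi> t x - alpha_fun \<alpha> \<phi> x) / t)"
        by auto
      have "integrable lborel (\<lambda>x. t * ((fhat \<alpha> 1 0 \<phi> t x - alpha_fun \<alpha> \<phi> x) / t) + alpha_fun \<alpha> \<phi> x)"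
        by (rule Bochner_Integration.integrable_add[OF Bochner_Integration.integrable_mult_right[OF it] intF])
      moreover have "(\<lambda>x. t * ((fhat \<alpha> 1 0 \<phi> t x - alpha_fun \<alpha> \<phi> x) / t) + alpha_fun \<alpha> \<phi> x)
          = fhat \<alpha> 1 0 \<phi> t" using t by (auto simp: fun_eq_iff)
      ultimately have ifh: "integrable lborel (fhat \<alpha> 1 0 \<phi> t)" by simp
      have as: "alpha_sum \<alpha> \<phi> t \<phi> = fhat \<alpha> 1 0 \<phi> t"
        using alpha_sum_fhat[OF cv lsc nn pr, of t \<alpha>] t by simp
      show ?case unfolding as J_def using ifh intF by simp
    qed
  qed
  have dJ: "deltaJ \<alpha> \<phi> \<phi> = L0"
    unfolding deltaJ_def by (rule tendsto_Lim[OF trivial_limit_at_right_real lim])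
  show ?thesis using m1 unfolding dJ L0_def by simp
qed

end
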